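(* In the setting of the Theorem of Sect. 3.4 (solution $\{\tau_{m,n}\}$ of the lattice $q$-UC hierarchy with $I=\{1,2\}$, $J=\{-1,-2\}$, homogeneous with exponents $d_{m,n}$), assume moreover $\tau_{m+2,n}=\tau_{m,n+2}=\tau_{m,n}$ and $d_{m+2,n}=d_{m,n+2}=d_{m,n}$. Put $f=f_{1,1}$, $g=g_{1,2}$. Then, with $T=T_1T_2$, $\overline F=T(F)$, the evolution closes on $(f,g)$: $$\overline f=\frac{c_{1,1}}{f}\cdot\frac{(\alpha g-1)(g-c_{1,2}\beta)}{(g-\alpha)(\beta g-c_{1,2})},\qquad \overline g=\frac{c_{1,2}}{g}\cdot\frac{(q\gamma\overline f-1)(\overline f-c_{1,1}\delta)}{(\overline f-q\gamma)(\delta\overline f-c_{1,1})},$$ where $(\overline\alpha,\overline\beta,\overline\gamma,\overline\delta)=(q\alpha,\beta/q,q\gamma,\delta/q)$ and $\alpha\delta/(\beta\gamma)=1$ (the $q$-analogue of the sixth Painlevé equation).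
   Context: $q\in\mathbb C^*$, $\boldsymbol t=(t_1,t_2,t_{-1},t_{-2})$; $T_k(t_k)=qt_k$ ($k=1,2$), $T_k(t_k)=q^{-1}t_k$ ($k=-1,-2$), $T_k(t_l)=t_l$ ($l\ne k$); $F^{(i_1,\dots,i_r)}=T_{i_1}\cdots T_{i_r}(F)$. The lattice $q$-UC hierarchy: $t_iT_i(\tau_{m,n+1})T_j(\tau_{m+1,n})-t_jT_j(\tau_{m,n+1})T_i(\tau_{m+1,n})=(t_i-t_j)T_iT_j(\tau_{m,n})\tau_{m+1,n+1}$ for all $i,j\in\{1,2,-1,-2\}$, $(m,n)\in\mathbb Z^2$, with $\tau_{m,n}$ nowhere vanishing and $\tau_{m,n}(q\boldsymbol t)=q^{d_{m,n}}\tau_{m,n}(\boldsymbol t)$, $d_{m,n}+d_{m+1,n+1}=d_{m,n+1}+d_{m+1,n}$. Definitions: $w_{m,n}=\tau_{m+1,n}/\tau_{m,n+1}$, $c_{m,n}=q^{d_{m+1,n}-d_{m,n+1}}$, $f_{m,n}=w^{(1)}_{m,n}/w^{(-1)}_{m,n}$, $g_{m,n}=w^{(1,-1)}_{m,n}/w^{(-1,-2)}_{m,n}$, $\alpha=t_1/t_{-2}$, $\beta=t_{-1}/t_2$, $\gamma=t_1/t_{-1}$, $\delta=t_{-2}/t_2$. *)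

theory Defs
  imports Complex_Main
begin

type_synonym pt = "complex \<times> complex \<times> complex \<times> complex"

definition coord :: "int \<Rightarrow> pt \<Rightarrow> complex" where
  "coord k t = (case t of (a, b, c, e) \<Rightarrow>
     (if k = 1 then a else if k = 2 then b else if k = -1 then c else if k = -2 then e else 0))"

text \<open>The point-shift underlying T_k: T_k(F)(t) = F (tsh q k t).\<close>
definition tsh :: "complex \<Rightarrow> int \<Rightarrow> pt \<Rightarrow> pt" where
  "tsh q k t = (case t of (a, b, c, e) \<Rightarrow>
     (if k = 1 then (q * a, b, c, e)
      else if k = 2 then (a, q * b, c, e)
      else if k = -1 then (a, b, c / q, e)
      else if k = -2 then (a, b, c, e / q)
      else (a, b, c, e)))"

definition scale :: "complex \<Rightarrow> pt \<Rightarrow> pt" where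
  "scale q t = (case t of (a, b, c, e) \<Rightarrow> (q * a, q * b, q * c, q * e))"

definition dom4 :: "pt \<Rightarrow> bool" where
  "dom4 t \<longleftrightarrow> (\<forall>k\<in>{1, 2, -1, -2::int}. coord k t \<noteq> 0)"

definition Kset :: "int set" where "Kset = {1, 2, -1, -2}"

definition wq :: "(int \<Rightarrow> int \<Rightarrow> pt \<Rightarrow> complex) \<Rightarrow> int \<Rightarrow> int \<Rightarrow> pt \<Rightarrow> complex" where
  "wq tau m n t = tau (m + 1) n t / tau m (n + 1) t"

definition cq :: "complex \<Rightarrow> (int \<Rightarrow> int \<Rightarrow> int) \<Rightarrow> int \<Rightarrow> int \<Rightarrow> complex" where
  "cq q d m n = q powi (d (m + 1) n - d m (n + 1))"

definition fq :: "complex \<Rightarrow> (int \<Rightarrow> int \<Rightarrow> pt \<Rightarrow> complex) \<Rightarrow> int \<Rightarrow> int \<Rightarrow> pt \<Rightarrow> complex" where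
  "fq q tau m n t = wq tau m n (tsh q 1 t) / wq tau m n (tsh q (-1) t)"

definition gq :: "complex \<Rightarrow> (int \<Rightarrow> int \<Rightarrow> pt \<Rightarrow> complex) \<Rightarrow> int \<Rightarrow> int \<Rightarrow> pt \<Rightarrow> complex" where
  "gq q tau m n t = wq tau m n (tsh q 1 (tsh q (-1) t)) / wq tau m n (tsh q (-1) (tsh q (-2) t))"

definition alph :: "pt \<Rightarrow> complex" where "alph t = coord 1 t / coord (-2) t"
definition bet :: "pt \<Rightarrow> complex" where "bet t = coord (-1) t / coord 2 t"
definition gam :: "pt \<Rightarrow> complex" where "gam t = coord 1 t / coord (-1) t"
definition del :: "pt \<Rightarrow> complex" where "del t = coord (-2) t / coord 2 t"

definition Tp :: "complex \<Rightarrow> pt \<Rightarrow> pt" where "Tp q t = tsh q 1 (tsh q 2 t)"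

end

theory Submission imports Defs begin

lemma tsh_simps[simp]:
  "tsh q 1 (a,b,c,e) = (q*a,b,c,e)" "tsh q 2 (a,b,c,e) = (a,q*b,c,e)"
  "tsh q (-1) (a,b,c,e) = (a,b,c/q,e)" "tsh q (-2) (a,b,c,e) = (a,b,c,e/q)"
  by (simp_all add: tsh_def)

lemma coord_simps[simp]:
  "coord 1 (a,b,c,e) = a" "coord 2 (a,b,c,e) = b"
  "coord (-1) (a,b,c,e) = c" "coord (-2) (a,b,c,e) = e"
  by (simp_all add: coord_def)

lemma dom4_tup: "dom4 (a,b,c,e) \<longleftrightarrow> a \<noteq> 0 \<and> b \<noteq> 0 \<and> c \<noteq> 0 \<and> e \<noteq> 0"
  by (simp add: dom4_def)

lemma dom4_tsh: assumes "q \<noteq> 0" "dom4 p" "k \<in> Kset" shows "dom4 (tsh q k p)"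
proof -
  obtain a b c e where p: "p = (a,b,c,e)" by (cases p) auto
  show ?thesis using assms unfolding p Kset_def by (auto simp: dom4_tup)
qed

lemma alg_R:
  fixes Cij Dij C0 D0 Xi Xj Bi Bj ti tj :: complex
  assumes nz: "Bi \<noteq> 0" "Bj \<noteq> 0" "Dij \<noteq> 0" "D0 \<noteq> 0"
    and E3: "ti * Xi * Bj - tj * Xj * Bi = (ti - tj) * Cij * D0"
    and E4: "ti * Bi * Xj - tj * Bj * Xi = (ti - tj) * Dij * C0"
  shows "Cij / Dij * (ti * (Xj / Bj) - tj * (Xi / Bi)) = C0 / D0 * (ti * (Xi / Bi) - tj * (Xj / Bj))"
proof -
  have "Cij * D0 * (ti * Bi * Xj - tj * Bj * Xi) = C0 * Dij * (ti * Xi * Bj - tj * Xj * Bi)"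
    unfolding E3 E4 by simp
  then have h: "Bi * Bj * (Cij * D0 * (ti * Bi * Xj - tj * Bj * Xi)) = Bi * Bj * (C0 * Dij * (ti * Xi * Bj - tj * Xj * Bi))" by simp
  show ?thesis using nz h by (simp add: field_simps)
qed

lemma Rprime:
  fixes q :: complex and tau :: "int \<Rightarrow> int \<Rightarrow> pt \<Rightarrow> complex"
  assumes q0: "q \<noteq> 0"
    and nonvanish: "\<And>m n t. dom4 t \<Longrightarrow> tau m n t \<noteq> 0"
    and hirota: "\<And>i j m n t. i \<in> Kset \<Longrightarrow> j \<in> Kset \<Longrightarrow> dom4 t \<Longrightarrow>
       coord i t * tau m (n + 1) (tsh q i t) * tau (m + 1) n (tsh q j t)
       - coord j t * tau m (n + 1) (tsh q j t) * tau (m + 1) n (tsh q i t)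
       = (coord i t - coord j t) * tau m n (tsh q i (tsh q j t)) * tau (m + 1) (n + 1) t"
    and per1: "\<And>m n t. dom4 t \<Longrightarrow> tau (m + 2) n t = tau m n t"
    and per2: "\<And>m n t. dom4 t \<Longrightarrow> tau m (n + 2) t = tau m n t"
    and p: "dom4 p" and i: "i \<in> Kset" and j: "j \<in> Kset"
  shows "wq tau 1 1 (tsh q i (tsh q j p)) * (coord i p * wq tau 1 2 (tsh q j p) - coord j p * wq tau 1 2 (tsh q i p))
       = wq tau 1 1 p * (coord i p * wq tau 1 2 (tsh q i p) - coord j p * wq tau 1 2 (tsh q j p))"
proof -
  have di: "dom4 (tsh q i p)" and dj: "dom4 (tsh q j p)" and dij: "dom4 (tsh q i (tsh q j p))"
    using dom4_tsh[OF q0] p i j by blast+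
  have P: "\<And>x. dom4 x \<Longrightarrow> tau 3 1 x = tau 1 1 x \<and> tau 3 2 x = tau 1 2 x \<and> tau 1 3 x = tau 1 1 x \<and> tau 2 3 x = tau 2 1 x"
    using per1[of _ 1 1] per1[of _ 1 2] per2[of _ 1 1] per2[of _ 2 1] by simp
  have E3: "coord i p * tau 2 2 (tsh q i p) * tau 1 1 (tsh q j p) - coord j p * tau 2 2 (tsh q j p) * tau 1 1 (tsh q i p)
     = (coord i p - coord j p) * tau 2 1 (tsh q i (tsh q j p)) * tau 1 2 p"
    using hirota[OF i j p, of 2 1] P[OF p] P[OF di] P[OF dj] by simp
  have E4: "coord i p * tau 1 1 (tsh q i p) * tau 2 2 (tsh q j p) - coord j p * tau 1 1 (tsh q j p) * tau 2 2 (tsh q i p)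
     = (coord i p - coord j p) * tau 1 2 (tsh q i (tsh q j p)) * tau 2 1 p"
    using hirota[OF i j p, of 1 2] P[OF p] P[OF di] P[OF dj] by simp
  show ?thesis
    unfolding wq_def using alg_R[OF nonvanish[OF di] nonvanish[OF dj] nonvanish[OF dij] nonvanish[OF p] E3 E4]
      P[OF di] P[OF dj] by simp
qed

lemma Rw:
  fixes q :: complex and tau :: "int \<Rightarrow> int \<Rightarrow> pt \<Rightarrow> complex"
  assumes q0: "q \<noteq> 0"
    and nonvanish: "\<And>m n t. dom4 t \<Longrightarrow> tau m n t \<noteq> 0"
    and hirota: "\<And>i j m n t. i \<in> Kset \<Longrightarrow> j \<in> Kset \<Longrightarrow> dom4 t \<Longrightarrow>
       coord i t * tau m (n + 1) (tsh q i t) * tau (m + 1) n (tsh q j t)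
       - coord j t * tau m (n + 1) (tsh q j t) * tau (m + 1) n (tsh q i t)
       = (coord i t - coord j t) * tau m n (tsh q i (tsh q j t)) * tau (m + 1) (n + 1) t"
    and per1: "\<And>m n t. dom4 t \<Longrightarrow> tau (m + 2) n t = tau m n t"
    and per2: "\<And>m n t. dom4 t \<Longrightarrow> tau m (n + 2) t = tau m n t"
    and p: "dom4 p" and i: "i \<in> Kset" and j: "j \<in> Kset"
  shows "wq tau 1 2 (tsh q i (tsh q j p)) * (coord i p * wq tau 1 1 (tsh q j p) - coord j p * wq tau 1 1 (tsh q i p))
       = wq tau 1 2 p * (coord i p * wq tau 1 1 (tsh q i p) - coord j p * wq tau 1 1 (tsh q j p))"
proof -
  have di: "dom4 (tsh q i p)" and dj: "dom4 (tsh q j p)" and dij: "dom4 (tsh q i (tsh q j p))"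
    using dom4_tsh[OF q0] p i j by blast+
  have P: "\<And>x. dom4 x \<Longrightarrow> tau 2 1 x = tau 0 1 x \<and> tau 1 2 x = tau 1 0 x \<and> tau 2 2 x = tau 0 0 x \<and> tau 1 3 x = tau 1 1 x"
    using per1[of _ 0 1] per2[of _ 1 0] per1[of _ 0 2] per2[of _ 0 0] per2[of _ 1 1] by simp
  have E1: "coord i p * tau 0 1 (tsh q i p) * tau 1 0 (tsh q j p) - coord j p * tau 0 1 (tsh q j p) * tau 1 0 (tsh q i p)
     = (coord i p - coord j p) * tau 0 0 (tsh q i (tsh q j p)) * tau 1 1 p"
    using hirota[OF i j p, of 0 0] by simp
  have E2: "coord i p * tau 1 0 (tsh q i p) * tau 0 1 (tsh q j p) - coord j p * tau 1 0 (tsh q j p) * tau 0 1 (tsh q i p)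
     = (coord i p - coord j p) * tau 1 1 (tsh q i (tsh q j p)) * tau 0 0 p"
    using hirota[OF i j p, of 1 1] P[OF p] P[OF di] P[OF dj] P[OF dij] by simp
  show ?thesis
    unfolding wq_def using alg_R[OF nonvanish[OF di] nonvanish[OF dj] nonvanish[OF dij] nonvanish[OF p] E1 E2]
      P[OF di] P[OF dj] P[OF p] P[OF dij] by simp
qed

lemma homW:
  fixes q :: complex
  assumes q0: "q \<noteq> 0"
    and nonvanish: "\<And>m n t. dom4 t \<Longrightarrow> tau m n t \<noteq> 0"
    and homog: "\<And>m n t. dom4 t \<Longrightarrow> tau m n (scale q t) = q powi (d m n) * tau m n t"
    and p: "dom4 p"
  shows "wq tau m n (scale q p) = cq q d m n * wq tau m n p"
  unfolding wq_def cq_def homog[OF p] using nonvanish[OF p] q0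
  by (simp add: power_int_diff)

lemma scale_tup: "scale q (a,b,c,e) = (q*a,q*b,q*c,q*e)" by (simp add: scale_def)

lemma part1_alg:
  fixes A B W1 Wm1 X Y a b c e c11 c12 :: complex
  assumes nz: "B \<noteq> 0" "W1 \<noteq> 0" "Wm1 \<noteq> 0" "Y \<noteq> 0" "a \<noteq> 0" "b \<noteq> 0" "c \<noteq> 0" "e \<noteq> 0"
    and D1: "X / Y - a / e \<noteq> 0" and D2: "c / b * (X / Y) - c12 \<noteq> 0"
    and Ea: "A * (a * Y - e * X) = Wm1 * (a * X - e * Y)"
    and Eb: "B * (b * X - c * (c12 * Y)) = W1 * (b * (c12 * Y) - c * X)"
  shows "c11 * A / B = c11 / (W1 / Wm1) * ((a / e * (X / Y) - 1) * (X / Y - c12 * (c / b))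
               / ((X / Y - a / e) * (c / b * (X / Y) - c12)))"
proof -
  have d1: "a * Y - e * X \<noteq> 0" using D1 nz by (simp add: field_simps)
  have d2: "c * X - c12 * b * Y \<noteq> 0" using D2 nz by (simp add: field_simps)
  have key: "A * W1 * (a * Y - e * X) * (b * (c12 * Y) - c * X) = B * Wm1 * (a * X - e * Y) * (b * X - c * (c12 * Y))"
  proof -
    have "A * W1 * (a * Y - e * X) * (b * (c12 * Y) - c * X) = (A * (a * Y - e * X)) * (W1 * (b * (c12 * Y) - c * X))"
      by (simp add: algebra_simps)
    also have "\<dots> = Wm1 * (a * X - e * Y) * (W1 * (b * (c12 * Y) - c * X))"
      using Ea by simp
    also have "\<dots> = Wm1 * (a * X - e * Y) * (B * (b * X - c * (c12 * Y)))" using Eb by simp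
    finally show ?thesis by (simp add: algebra_simps)
  qed
  define Nn where "Nn = (a * X - e * Y) * (b * X - c * (c12 * Y))"
  define Dd where "Dd = (a * Y - e * X) * (b * (c12 * Y) - c * X)"
  have d2': "b * (c12 * Y) - c * X \<noteq> 0" using d2 by (simp add: algebra_simps)
  have Dd0: "Dd \<noteq> 0" unfolding Dd_def using d1 d2' by simp
  have ND: "(a / e * (X / Y) - 1) * (X / Y - c12 * (c / b)) / ((X / Y - a / e) * (c / b * (X / Y) - c12)) = Nn / Dd"
  proof -
    have f1: "a / e * (X / Y) - 1 = (a * X - e * Y) / (e * Y)" using nz by (simp add: field_simps)
    have f2: "X / Y - c12 * (c / b) = (b * X - c * (c12 * Y)) / (b * Y)" using nz by (simp add: field_simps)
    have f3: "X / Y - a / e = (a * Y - e * X) / (- (e * Y))" using nz by (simp add: field_simps)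
    have f4: "c / b * (X / Y) - c12 = (b * (c12 * Y) - c * X) / (- (b * Y))" using nz by (simp add: field_simps)
    show ?thesis unfolding f1 f2 f3 f4 Nn_def Dd_def using nz by simp
  qed
  have k2: "A * (W1 * Dd) = B * Wm1 * Nn" using key unfolding Dd_def Nn_def by (simp add: mult.assoc)
  have Aeq: "A = B * Wm1 * Nn / (W1 * Dd)" using k2 Dd0 nz by (simp add: eq_divide_eq)
  show ?thesis unfolding ND Aeq using nz Dd0 by (simp add: field_simps)
qed

lemma part2_alg:
  fixes U V A B X Y a b c e c11 c12 q :: complex
  assumes nz: "V \<noteq> 0" "X \<noteq> 0" "Y \<noteq> 0" "B \<noteq> 0" "a \<noteq> 0" "b \<noteq> 0" "c \<noteq> 0" "e \<noteq> 0" "c11 \<noteq> 0" "q \<noteq> 0"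
    and D1: "c11 * A / B - q * (a / c) \<noteq> 0" and D2: "e / b * (c11 * A / B) - c11 \<noteq> 0"
    and G1: "U * (q * a * B - c * (c11 * A)) = (c12 * Y) * (q * a * (c11 * A) - c * B)"
    and G2: "V * (b * A - e * B) = X * (b * B - e * A)"
  shows "U / V = c12 / (X / Y) * ((q * (a / c) * (c11 * A / B) - 1) * (c11 * A / B - c11 * (e / b))
               / ((c11 * A / B - q * (a / c)) * (e / b * (c11 * A / B) - c11)))"
proof -
  define F where "F = c11 * A / B"
  define Nn where "Nn = (q * a * (c11 * A) - c * B) * (b * A - e * B)"
  define Dd where "Dd = (q * a * B - c * (c11 * A)) * (b * B - e * A)"
  have d1: "q * a * B - c * (c11 * A) \<noteq> 0" using D1 nz by (simp add: field_simps)
  have d2: "b * B - e * A \<noteq> 0" using D2 nz by (simp add: field_simps)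
  have Dd0: "Dd \<noteq> 0" unfolding Dd_def using d1 d2 by simp
  have ND: "(q * (a / c) * F - 1) * (F - c11 * (e / b)) / ((F - q * (a / c)) * (e / b * F - c11)) = Nn / Dd"
  proof -
    have f1: "q * (a / c) * F - 1 = (q * a * (c11 * A) - c * B) / (c * B)" unfolding F_def using nz by (simp add: field_simps)
    have f2: "F - c11 * (e / b) = c11 * (b * A - e * B) / (b * B)" unfolding F_def using nz by (simp add: field_simps)
    have f3: "F - q * (a / c) = (q * a * B - c * (c11 * A)) / (- (c * B))" unfolding F_def using nz by (simp add: field_simps)
    have f4: "e / b * F - c11 = c11 * (b * B - e * A) / (- (b * B))" unfolding F_def using nz by (simp add: field_simps)
    show ?thesis unfolding f1 f2 f3 f4 Nn_def Dd_def using nz by simp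
  qed
  have k: "U * (X * Dd) = V * (c12 * Y * Nn)"
  proof -
    have "U * (X * Dd) = (U * (q * a * B - c * (c11 * A))) * (X * (b * B - e * A))"
      unfolding Dd_def by (simp add: algebra_simps)
    also have "\<dots> = (c12 * Y) * (q * a * (c11 * A) - c * B) * (V * (b * A - e * B))"
      unfolding G1 G2 by simp
    also have "\<dots> = V * (c12 * Y * Nn)" unfolding Nn_def by (simp add: algebra_simps)
    finally show ?thesis .
  qed
  have Ueq: "U = V * (c12 * Y * Nn) / (X * Dd)" using k Dd0 nz by (simp add: eq_divide_eq)
  show ?thesis unfolding F_def[symmetric] ND unfolding Ueq using nz Dd0 by (simp add: field_simps)
qed

theorem mainTheorem6:
  fixes q :: complex and tau :: "int \<Rightarrow> int \<Rightarrow> pt \<Rightarrow> complex" and d :: "int \<Rightarrow> int \<Rightarrow> int"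
  assumes q0: "q \<noteq> 0"
    and nonvanish: "\<And>m n t. dom4 t \<Longrightarrow> tau m n t \<noteq> 0"
    and hirota: "\<And>i j m n t. i \<in> Kset \<Longrightarrow> j \<in> Kset \<Longrightarrow> dom4 t \<Longrightarrow>
       coord i t * tau m (n + 1) (tsh q i t) * tau (m + 1) n (tsh q j t)
       - coord j t * tau m (n + 1) (tsh q j t) * tau (m + 1) n (tsh q i t)
       = (coord i t - coord j t) * tau m n (tsh q i (tsh q j t)) * tau (m + 1) (n + 1) t"
    and homog: "\<And>m n t. dom4 t \<Longrightarrow> tau m n (scale q t) = q powi (d m n) * tau m n t"
    and dcond: "\<And>m n. d m n + d (m + 1) (n + 1) = d m (n + 1) + d (m + 1) n"
    and per1: "\<And>m n t. dom4 t \<Longrightarrow> tau (m + 2) n t = tau m n t"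
    and per2: "\<And>m n t. dom4 t \<Longrightarrow> tau m (n + 2) t = tau m n t"
    and dper1: "\<And>m n. d (m + 2) n = d m n"
    and dper2: "\<And>m n. d m (n + 2) = d m n"
    and t: "dom4 t"
  shows "alph (Tp q t) = q * alph t \<and> bet (Tp q t) = bet t / q \<and>
         gam (Tp q t) = q * gam t \<and> del (Tp q t) = del t / q \<and>
         alph t * del t / (bet t * gam t) = 1 \<and>
         ((gq q tau 1 2 t - alph t \<noteq> 0 \<and> bet t * gq q tau 1 2 t - cq q d 1 2 \<noteq> 0) \<longrightarrow>
            fq q tau 1 1 (Tp q t) =
              cq q d 1 1 / fq q tau 1 1 t *
              ((alph t * gq q tau 1 2 t - 1) * (gq q tau 1 2 t - cq q d 1 2 * bet t)
               / ((gq q tau 1 2 t - alph t) * (bet t * gq q tau 1 2 t - cq q d 1 2)))) \<and>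
         ((fq q tau 1 1 (Tp q t) - q * gam t \<noteq> 0 \<and> del t * fq q tau 1 1 (Tp q t) - cq q d 1 1 \<noteq> 0) \<longrightarrow>
            gq q tau 1 2 (Tp q t) =
              cq q d 1 2 / gq q tau 1 2 t *
              ((q * gam t * fq q tau 1 1 (Tp q t) - 1) * (fq q tau 1 1 (Tp q t) - cq q d 1 1 * del t)
               / ((fq q tau 1 1 (Tp q t) - q * gam t) * (del t * fq q tau 1 1 (Tp q t) - cq q d 1 1))))"
proof -
  obtain a b c e where tt: "t = (a, b, c, e)" by (cases t) auto
  have nz: "a \<noteq> 0" "b \<noteq> 0" "c \<noteq> 0" "e \<noteq> 0" using t unfolding tt dom4_tup by auto
  define W where "W = wq tau 1 1"
  define W' where "W' = wq tau 1 2"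
  define c11 where "c11 = cq q d 1 1"
  define c12 where "c12 = cq q d 1 2"
  have c11nz: "c11 \<noteq> 0" unfolding c11_def cq_def using q0 by simp
  have dm: "\<And>x y z w. dom4 (x, y, z, w) \<longleftrightarrow> x \<noteq> 0 \<and> y \<noteq> 0 \<and> z \<noteq> 0 \<and> w \<noteq> 0" by (rule dom4_tup)
  have Wnz: "\<And>m n p. dom4 p \<Longrightarrow> wq tau m n p \<noteq> 0" unfolding wq_def using nonvanish by simp
  have KS: "1 \<in> Kset" "2 \<in> Kset" "-1 \<in> Kset" "-2 \<in> Kset" by (simp_all add: Kset_def)
  note RP = Rprime[where q=q and tau=tau, OF q0 nonvanish hirota per1 per2]
  note RW = Rw[where q=q and tau=tau, OF q0 nonvanish hirota per1 per2]
  note HW = homW[where q=q and tau=tau and d=d, OF q0 nonvanish homog]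
  have H1: "W (q*(q*a), q*b, c, e) = c11 * W (q*a, b, c/q, e/q)"
  proof -
    have "scale q (q*a, b, c/q, e/q) = (q*(q*a), q*b, c, e)" using q0 by (simp add: scale_tup)
    then show ?thesis using HW[of "(q*a, b, c/q, e/q)" 1 1] q0 nz unfolding W_def c11_def by (simp add: dm)
  qed
  have H2: "W' (q*a, q*b, c, e) = c12 * W' (a, b, c/q, e/q)"
  proof -
    have "scale q (a, b, c/q, e/q) = (q*a, q*b, c, e)" using q0 by (simp add: scale_tup)
    then show ?thesis using HW[of "(a, b, c/q, e/q)" 1 2] q0 nz unfolding W'_def c12_def by (simp add: dm)
  qed
  have Ea: "W (q*a, b, c/q, e/q) * (a * W' (a, b, c/q, e/q) - e * W' (q*a, b, c/q, e))
        = W (a, b, c/q, e) * (a * W' (q*a, b, c/q, e) - e * W' (a, b, c/q, e/q))"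
    using RP[of "(a, b, c/q, e)" 1 "-2"] KS q0 nz unfolding W_def W'_def by (simp add: dm)
  have Eb: "W (q*a, q*b, c/q, e) * (b * W' (q*a, b, c/q, e) - c * (c12 * W' (a, b, c/q, e/q)))
        = W (q*a, b, c, e) * (b * (c12 * W' (a, b, c/q, e/q)) - c * W' (q*a, b, c/q, e))"
    using RP[of "(q*a, b, c, e)" 2 "-1"] KS q0 nz H2 unfolding W_def W'_def by (simp add: dm)
  have G1: "W' (q*(q*a), q*b, c/q, e) * (q * a * W (q*a, q*b, c/q, e) - c * (c11 * W (q*a, b, c/q, e/q)))
        = (c12 * W' (a, b, c/q, e/q)) * (q * a * (c11 * W (q*a, b, c/q, e/q)) - c * W (q*a, q*b, c/q, e))"
    using RW[of "(q*a, q*b, c, e)" 1 "-1"] KS q0 nz H1 H2 unfolding W_def W'_def by (simp add: dm)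
  have G2: "W' (q*a, q*b, c/q, e/q) * (b * W (q*a, b, c/q, e/q) - e * W (q*a, q*b, c/q, e))
        = W' (q*a, b, c/q, e) * (b * W (q*a, q*b, c/q, e) - e * W (q*a, b, c/q, e/q))"
    using RW[of "(q*a, b, c/q, e)" 2 "-2"] KS q0 nz unfolding W_def W'_def by (simp add: dm)
  have nzW: "W (q*a, q*b, c/q, e) \<noteq> 0" "W (q*a, b, c, e) \<noteq> 0" "W (a, b, c/q, e) \<noteq> 0"
      "W' (a, b, c/q, e/q) \<noteq> 0" "W' (q*a, q*b, c/q, e/q) \<noteq> 0" "W' (q*a, b, c/q, e) \<noteq> 0"
    unfolding W_def W'_def using Wnz q0 nz by (simp_all add: dm)
  have fT: "fq q tau 1 1 (Tp q t) = c11 * W (q*a, b, c/q, e/q) / W (q*a, q*b, c/q, e)"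
    unfolding fq_def Tp_def tt using H1 unfolding W_def by simp
  have f0: "fq q tau 1 1 t = W (q*a, b, c, e) / W (a, b, c/q, e)"
    unfolding fq_def tt W_def by simp
  have g0: "gq q tau 1 2 t = W' (q*a, b, c/q, e) / W' (a, b, c/q, e/q)"
    unfolding gq_def tt W'_def by simp
  have gT: "gq q tau 1 2 (Tp q t) = W' (q*(q*a), q*b, c/q, e) / W' (q*a, q*b, c/q, e/q)"
    unfolding gq_def Tp_def tt W'_def by simp
  have ab: "alph t = a / e" "bet t = c / b" "gam t = a / c" "del t = e / b"
    unfolding tt alph_def bet_def gam_def del_def by simp_all
  have abT: "alph (Tp q t) = q * alph t \<and> bet (Tp q t) = bet t / q \<and>
         gam (Tp q t) = q * gam t \<and> del (Tp q t) = del t / q \<and> alph t * del t / (bet t * gam t) = 1"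
    unfolding ab unfolding tt alph_def bet_def gam_def del_def Tp_def using nz q0 by (simp add: field_simps)
  show ?thesis
    unfolding c11_def[symmetric] c12_def[symmetric] fT f0 g0 gT ab
    using abT
    using part1_alg[OF nzW(1) nzW(2) nzW(3) nzW(4) nz _ _ Ea Eb, of c11]
    using part2_alg[OF nzW(5) nzW(6) nzW(4) nzW(1) nz c11nz q0 _ _ G1 G2]
    unfolding ab by simp
qed

end
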